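(* Let $k \in \mathbb{N}$ with $k > 3$. Then for any $q \in \mathbb{N}$ such that $q = 1$ or $q < \frac{k}{4}$, there exist $a_1, \dots, a_q \in \mathbb{N}$ such that for every $N \in \mathbb{N}$ there exists an $(a_1, \dots, a_k)$-flip graph for some $a_{q+1}, \dots, a_k \in \mathbb{N}$ with $a_k > N$.
   Context: For a graph $G$ with an edge-colouring $f\colon E(G)\to\{1,\dots,k\}$ and $1\le j\le k$: $e_j[v]$ is the number of edges coloured $j$ in the subgraph induced by the closed neighbourhood $N[v]$ of $v$, and $\deg_j(v)$ is the number of edges coloured $j$ incident to $v$. Given a strictly increasing sequence of positive integers $(a_1,\dots,a_k)$, a $d$-regular graph $G$ with $d=\sum_j a_j$ is an $(a_1,\dots,a_k)$-flip graph if there is an edge-colouring with colours $\{1,\dots,k\}$ such that $\deg_j(v)=a_j$ for all vertices $v$ and all $j$, and $e_k[v]<e_{k-1}[v]<\dots<e_1[v]$ for every vertex $v$. *)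

theory Defs
  imports Main
begin

definition simple_graph :: "'v set \<Rightarrow> 'v set set \<Rightarrow> bool" where
  "simple_graph V E \<longleftrightarrow> finite V \<and>
     (\<forall>e\<in>E. \<exists>u v. e = {u, v} \<and> u \<noteq> v \<and> u \<in> V \<and> v \<in> V)"

definition closed_nbhd :: "'v set set \<Rightarrow> 'v \<Rightarrow> 'v set" where
  "closed_nbhd E v = insert v {u. {u, v} \<in> E}"

definition degree :: "'v set set \<Rightarrow> 'v \<Rightarrow> nat" where
  "degree E v = card {e\<in>E. v \<in> e}"

definition col_degree :: "'v set set \<Rightarrow> ('v set \<Rightarrow> nat) \<Rightarrow> nat \<Rightarrow> 'v \<Rightarrow> nat" where
  "col_degree E f j v = card {e\<in>E. v \<in> e \<and> f e = j}"

definition col_edges_nbhd :: "'v set set \<Rightarrow> ('v set \<Rightarrow> nat) \<Rightarrow> nat \<Rightarrow> 'v \<Rightarrow> nat" where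
  "col_edges_nbhd E f j v = card {e\<in>E. e \<subseteq> closed_nbhd E v \<and> f e = j}"

text \<open>(a_1,...,a_k)-flip graph; the sequence is a :: nat => nat read on indices 1..k.\<close>
definition flip_graph :: "nat \<Rightarrow> (nat \<Rightarrow> nat) \<Rightarrow> 'v set \<Rightarrow> 'v set set \<Rightarrow> bool" where
  "flip_graph k a V E \<longleftrightarrow>
     k \<ge> 1 \<and> 0 < a 1 \<and> (\<forall>j\<in>{1..<k}. a j < a (Suc j)) \<and>
     simple_graph V E \<and> V \<noteq> {} \<and>
     (\<forall>v\<in>V. degree E v = (\<Sum>j=1..k. a j)) \<and>
     (\<exists>f. (\<forall>e\<in>E. f e \<in> {1..k}) \<and>
          (\<forall>v\<in>V. (\<forall>j\<in>{1..k}. col_degree E f j v = a j) \<and>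
                  (\<forall>j\<in>{1..<k}. col_edges_nbhd E f (Suc j) v < col_edges_nbhd E f j v)))"

end

theory Submission
  imports Defs "HOL-Library.Countable"
begin

definition edges_of :: "('a \<Rightarrow> 'a \<Rightarrow> bool) \<Rightarrow> 'a set set" where
 "edges_of adj = {{u,w} | u w. adj u w}"
definition ecol :: "('a \<Rightarrow> 'a \<Rightarrow> nat) \<Rightarrow> 'a set \<Rightarrow> nat" where
 "ecol col e = (SOME j. \<exists>u w. e = {u,w} \<and> col u w = j)"
definition OPS :: "('a \<Rightarrow> 'a \<Rightarrow> bool) \<Rightarrow> ('a \<Rightarrow> 'a \<Rightarrow> nat) \<Rightarrow> 'a \<Rightarrow> nat \<Rightarrow> ('a \<times> 'a) set" where
 "OPS adj col v j = {(u,w). u \<in> insert v {w. adj v w} \<and> w \<in> insert v {w. adj v w} \<and> adj u w \<and> col u w = j}"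

lemma ecol_eq: assumes "\<forall>u w. col u w = col w u" shows "ecol col {u,w} = col u w"
proof -
  have "\<exists>j. \<exists>u' w'. {u,w} = {u',w'} \<and> col u' w' = j" by blast
  then have "\<exists>u' w'. {u,w} = {u',w'} \<and> col u' w' = ecol col {u,w}" unfolding ecol_def by (rule someI_ex)
  then obtain u' w' where "{u,w} = {u',w'}" "col u' w' = ecol col {u,w}" by blast
  then show ?thesis using assms by (metis doubleton_eq_iff)
qed

lemma mem_edges_of: assumes sym: "\<forall>u w. adj u w \<longrightarrow> adj w u"
  shows "{u,v} \<in> edges_of adj \<longleftrightarrow> adj u v"
  unfolding edges_of_def using sym by (auto simp: doubleton_eq_iff)

lemma nbhd_eq: assumes sym: "\<forall>u w. adj u w \<longrightarrow> adj w u"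
  shows "closed_nbhd (edges_of adj) v = insert v {w. adj v w}"
  unfolding closed_nbhd_def using mem_edges_of[OF sym] sym by blast

lemma coldeg_eq:
  assumes sym: "\<forall>u w. adj u w \<longrightarrow> adj w u" and csym: "\<forall>u w. col u w = col w u"
  shows "col_degree (edges_of adj) (ecol col) j v = card {w. adj v w \<and> col v w = j}"
proof -
  have "{e \<in> edges_of adj. v \<in> e \<and> ecol col e = j} = (\<lambda>w. {v,w}) ` {w. adj v w \<and> col v w = j}"
  proof (rule set_eqI, rule iffI)
    fix e assume "e \<in> {e \<in> edges_of adj. v \<in> e \<and> ecol col e = j}"
    then obtain u w where e: "e = {u,w}" "adj u w" "v \<in> e" "ecol col e = j" unfolding edges_of_def by blast
    show "e \<in> (\<lambda>w. {v,w}) ` {w. adj v w \<and> col v w = j}"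
    proof (cases "v = u")
      case True then show ?thesis using e ecol_eq[OF csym] by auto
    next
      case False then have "v = w" using e by auto
      then show ?thesis using e ecol_eq[OF csym, of v u] sym by (auto simp: insert_commute)
    qed
  next
    fix e assume "e \<in> (\<lambda>w. {v,w}) ` {w. adj v w \<and> col v w = j}"
    then show "e \<in> {e \<in> edges_of adj. v \<in> e \<and> ecol col e = j}"
      using ecol_eq[OF csym] unfolding edges_of_def by auto
  qed
  moreover have "inj_on (\<lambda>w. {v,w}) A" for A
    by (auto simp: inj_on_def doubleton_eq_iff)
  ultimately show ?thesis unfolding col_degree_def by (simp add: card_image)
qed

lemma deg_eq:
  assumes sym: "\<forall>u w. adj u w \<longrightarrow> adj w u"
  shows "degree (edges_of adj) v = card {w. adj v w}"
proof -
  have "{e \<in> edges_of adj. v \<in> e} = (\<lambda>w. {v,w}) ` {w. adj v w}"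
    unfolding edges_of_def using sym by (auto simp: insert_commute)
  moreover have "inj_on (\<lambda>w. {v,w}) A" for A
    by (auto simp: inj_on_def doubleton_eq_iff)
  ultimately show ?thesis unfolding degree_def by (simp add: card_image)
qed

lemma edges_nbhd_eq:
  assumes sym: "\<forall>u w. adj u w \<longrightarrow> adj w u" and csym: "\<forall>u w. col u w = col w u"
    and irr: "\<forall>u. \<not> adj u u" and fin: "finite V" and inV: "\<forall>u w. adj u w \<longrightarrow> u \<in> V \<and> w \<in> V"
  shows "2 * col_edges_nbhd (edges_of adj) (ecol col) j v = card (OPS adj col v j)"
proof -
  let ?N = "insert v {w. adj v w}"
  let ?ES = "{e \<in> edges_of adj. e \<subseteq> closed_nbhd (edges_of adj) v \<and> ecol col e = j}"
  let ?g = "\<lambda>(u,w). {u,w}"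
  have finO: "finite (OPS adj col v j)"
    by (rule finite_subset[of _ "insert v V \<times> insert v V"]) (use fin inV in \<open>auto simp: OPS_def\<close>)
  have img: "?g ` OPS adj col v j = ?ES"
  proof (rule set_eqI, rule iffI)
    fix e assume "e \<in> ?g ` OPS adj col v j"
    then obtain u w where "e = {u,w}" "(u,w) \<in> OPS adj col v j" by auto
    then have uw: "e = {u,w}" "adj u w" "u \<in> ?N" "w \<in> ?N" "col u w = j" unfolding OPS_def by auto
    have "e \<in> edges_of adj" unfolding edges_of_def using uw by blast
    moreover have "e \<subseteq> closed_nbhd (edges_of adj) v" unfolding nbhd_eq[OF sym] using uw(1,3,4) by blast
    moreover have "ecol col e = j" using uw ecol_eq[OF csym] by simp
    ultimately show "e \<in> ?ES" by blast
  next
    fix e assume "e \<in> ?ES"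
    then have e1: "e \<in> edges_of adj" and e2: "e \<subseteq> ?N" and e3: "ecol col e = j"
      unfolding nbhd_eq[OF sym] by auto
    from e1 obtain u w where uw: "e = {u,w}" "adj u w" unfolding edges_of_def by blast
    have "u \<in> ?N" "w \<in> ?N" using e2 uw(1) by auto
    moreover have "col u w = j" using e3 uw(1) ecol_eq[OF csym] by simp
    ultimately have "(u,w) \<in> OPS adj col v j" unfolding OPS_def using uw(2) by blast
    then show "e \<in> ?g ` OPS adj col v j" using uw(1) by force
  qed
  have fib: "card {x \<in> OPS adj col v j. ?g x = e} = 2" if eIn: "e \<in> ?g ` OPS adj col v j" for e
  proof -
    obtain x where x: "e = ?g x" "x \<in> OPS adj col v j" by (rule imageE[OF eIn])
    obtain u w where "x = (u,w)" by (cases x)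
    then have uw: "e = {u,w}" "(u,w) \<in> OPS adj col v j" using x by auto
    have "u \<noteq> w" using uw(2) irr unfolding OPS_def by auto
    have "(w,u) \<in> OPS adj col v j" using uw(2) sym csym unfolding OPS_def by simp
    have "{x \<in> OPS adj col v j. ?g x = e} = {(u,w),(w,u)}"
    proof (rule set_eqI)
      fix x show "x \<in> {x \<in> OPS adj col v j. ?g x = e} \<longleftrightarrow> x \<in> {(u,w),(w,u)}"
      proof (cases x)
        case (Pair a b)
        have "{a,b} = {u,w} \<longleftrightarrow> (a,b) = (u,w) \<or> (a,b) = (w,u)" by (auto simp: doubleton_eq_iff)
        then show ?thesis using Pair uw \<open>(w,u) \<in> OPS adj col v j\<close> by (auto simp: insert_commute)
      qed
    qed
    then show ?thesis using \<open>u \<noteq> w\<close> by simp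
  qed
  have "card (OPS adj col v j) = (\<Sum>e\<in>?g ` OPS adj col v j. card {x \<in> OPS adj col v j. ?g x = e})"
    using sum.image_gen[OF finO, of "\<lambda>_. 1::nat" ?g] by simp
  also have "\<dots> = (\<Sum>e\<in>?g ` OPS adj col v j. 2)" using fib by simp
  also have "\<dots> = 2 * card ?ES" using img by simp
  finally show ?thesis unfolding col_edges_nbhd_def by simp
qed


lemma deg_sum:
  fixes k :: nat and col :: "'a \<Rightarrow> 'a \<Rightarrow> nat"
  assumes fin: "finite {w. adj v w}" and rng: "\<forall>w. adj v w \<longrightarrow> col v w \<in> {1..k}"
  shows "card {w. adj v w} = (\<Sum>j\<in>{1..k}. card {w. adj v w \<and> col v w = j})"
proof -
  have eq: "{w. adj v w} = (\<Union>j\<in>{1..k}. {w. adj v w \<and> col v w = j})" using rng by auto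
  have "card (\<Union>j\<in>{1..k}. {w. adj v w \<and> col v w = j}) = (\<Sum>j\<in>{1..k}. card {w. adj v w \<and> col v w = j})"
    by (rule card_UN_disjoint) (use fin in \<open>auto intro: finite_subset\<close>)
  then show ?thesis using eq by simp
qed

definition adjN :: "('a \<Rightarrow> nat) \<Rightarrow> ('a \<Rightarrow> 'a \<Rightarrow> bool) \<Rightarrow> nat \<Rightarrow> nat \<Rightarrow> bool" where
  "adjN g adj u w = (u \<in> range g \<and> w \<in> range g \<and> adj (inv g u) (inv g w))"
definition colN :: "('a \<Rightarrow> nat) \<Rightarrow> ('a \<Rightarrow> 'a \<Rightarrow> nat) \<Rightarrow> nat \<Rightarrow> nat \<Rightarrow> nat" where
  "colN g col u w = col (inv g u) (inv g w)"

lemma adjN_g: "inj g \<Longrightarrow> adjN g adj (g x) (g y) = adj x y"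
  unfolding adjN_def by simp
lemma colN_g: "inj g \<Longrightarrow> colN g col (g x) (g y) = col x y"
  unfolding colN_def by simp
lemma adjN_range: "adjN g adj u w \<Longrightarrow> \<exists>x y. u = g x \<and> w = g y \<and> adj x y"
  unfolding adjN_def by (metis f_inv_into_f)

lemma flip_from_adj:
  fixes V :: "'a set" and g :: "'a \<Rightarrow> nat" and adj :: "'a \<Rightarrow> 'a \<Rightarrow> bool" and col :: "'a \<Rightarrow> 'a \<Rightarrow> nat"
  assumes ig: "inj g" and fin: "finite V" and ne: "V \<noteq> {}"
    and inV: "\<forall>u w. adj u w \<longrightarrow> u \<in> V \<and> w \<in> V" and irr: "\<forall>u. \<not> adj u u"
    and sym: "\<forall>u w. adj u w \<longrightarrow> adj w u" and csym: "\<forall>u w. col u w = col w u"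
    and rng: "\<forall>u w. adj u w \<longrightarrow> col u w \<in> {1..k}"
    and k1: "k \<ge> 1" and b1: "0 < b 1" and incr: "\<forall>j\<in>{1..<k}. b j < b (Suc j)"
    and cd: "\<forall>v\<in>V. \<forall>j\<in>{1..k}. card {w. adj v w \<and> col v w = j} = b j"
    and ed: "\<forall>v\<in>V. \<forall>j\<in>{1..<k}. card (OPS adj col v (Suc j)) < card (OPS adj col v j)"
  shows "\<exists>(V'::nat set) E. flip_graph k b V' E"
proof -
  let ?A = "adjN g adj" and ?C = "colN g col"
  let ?V = "g ` V" and ?E = "edges_of ?A" and ?f = "ecol ?C"
  have Asym: "\<forall>u w. ?A u w \<longrightarrow> ?A w u" using sym unfolding adjN_def by blast
  have Airr: "\<forall>u. \<not> ?A u u" using irr unfolding adjN_def by blast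
  have Acsym: "\<forall>u w. ?C u w = ?C w u" using csym unfolding colN_def by simp
  have AinV: "\<forall>u w. ?A u w \<longrightarrow> u \<in> ?V \<and> w \<in> ?V"
  proof (intro allI impI)
    fix u w assume "?A u w"
    then obtain x y where "u = g x" "w = g y" "adj x y" using adjN_range by metis
    then show "u \<in> ?V \<and> w \<in> ?V" using inV by blast
  qed
  have finV: "finite ?V" using fin by simp
  have Arng: "\<forall>u w. ?A u w \<longrightarrow> ?C u w \<in> {1..k}"
    using rng unfolding adjN_def colN_def by blast
  have Dimg: "{w. ?A (g v) w \<and> ?C (g v) w = j} = g ` {w. adj v w \<and> col v w = j}" for v j
  proof (rule set_eqI, rule iffI)
    fix w assume "w \<in> {w. ?A (g v) w \<and> ?C (g v) w = j}"
    then obtain y where "w = g y" "adj v y" "col v y = j"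
      using adjN_range[of g adj "g v" w] ig adjN_g colN_g by (metis (mono_tags, lifting) injD mem_Collect_eq)
    then show "w \<in> g ` {w. adj v w \<and> col v w = j}" by blast
  next
    fix w assume "w \<in> g ` {w. adj v w \<and> col v w = j}"
    then show "w \<in> {w. ?A (g v) w \<and> ?C (g v) w = j}" using adjN_g[OF ig] colN_g[OF ig] by auto
  qed
  have Dcard: "card {w. ?A (g v) w \<and> ?C (g v) w = j} = card {w. adj v w \<and> col v w = j}" for v j
    unfolding Dimg using ig by (simp add: card_image inj_on_subset)
  have Nimg: "{w. ?A (g v) w} = g ` {w. adj v w}" for v
  proof (rule set_eqI, rule iffI)
    fix w assume "w \<in> {w. ?A (g v) w}"
    then obtain y where "w = g y" "adj v y"
      using adjN_range[of g adj "g v" w] ig adjN_g by (metis (mono_tags, lifting) injD mem_Collect_eq)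
    then show "w \<in> g ` {w. adj v w}" by blast
  next
    fix w assume "w \<in> g ` {w. adj v w}"
    then show "w \<in> {w. ?A (g v) w}" using adjN_g[OF ig] by auto
  qed
  have Oimg: "OPS ?A ?C (g v) j = map_prod g g ` OPS adj col v j" for v j
  proof (rule set_eqI, rule iffI)
    fix p assume p: "p \<in> OPS ?A ?C (g v) j"
    obtain u w where pu: "p = (u,w)" by (cases p)
    have "?A u w" using p pu unfolding OPS_def by simp
    then obtain x y where xy: "u = g x" "w = g y" "adj x y" using adjN_range by metis
    have "(x,y) \<in> OPS adj col v j" using p pu xy unfolding OPS_def adjN_g[OF ig] colN_g[OF ig]
      using ig by (auto simp: inj_eq adjN_g[OF ig] colN_g[OF ig])
    then show "p \<in> map_prod g g ` OPS adj col v j" using pu xy by force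
  next
    fix p assume "p \<in> map_prod g g ` OPS adj col v j"
    then obtain x y where "p = (g x, g y)" "(x,y) \<in> OPS adj col v j" by auto
    then show "p \<in> OPS ?A ?C (g v) j" unfolding OPS_def using ig
      by (auto simp: inj_eq adjN_g[OF ig] colN_g[OF ig])
  qed
  have Ocard: "card (OPS ?A ?C (g v) j) = card (OPS adj col v j)" for v j
  proof -
    have "inj (map_prod g g)" using map_prod_inj_on[OF ig ig] by simp
    then show ?thesis unfolding Oimg by (simp add: card_image inj_on_subset)
  qed
  have finN: "finite {w. ?A u w}" for u
    by (rule finite_subset[OF _ finV]) (use AinV in blast)
  have "flip_graph k b ?V ?E"
    unfolding flip_graph_def
  proof (intro conjI)
    show "k \<ge> 1" by fact
    show "0 < b 1" by fact
    show "\<forall>j\<in>{1..<k}. b j < b (Suc j)" by fact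
    show "simple_graph ?V ?E" unfolding simple_graph_def
    proof (intro conjI ballI)
      show "finite ?V" by (rule finV)
    next
      fix e assume "e \<in> ?E"
      then obtain u w where uw: "e = {u,w}" "?A u w" unfolding edges_of_def by blast
      have "u \<noteq> w" using uw(2) Airr by metis
      moreover have "u \<in> ?V" "w \<in> ?V" using uw(2) AinV by auto
      ultimately show "\<exists>u v. e = {u, v} \<and> u \<noteq> v \<and> u \<in> ?V \<and> v \<in> ?V" using uw(1) by blast
    qed
    show "?V \<noteq> {}" using ne by simp
    show "\<forall>v\<in>?V. degree ?E v = (\<Sum>j = 1..k. b j)"
    proof
      fix v' assume "v' \<in> ?V"
      then obtain v where v: "v' = g v" "v \<in> V" by auto
      have "degree ?E v' = card {w. ?A v' w}" by (rule deg_eq[OF Asym])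
      also have "\<dots> = (\<Sum>j\<in>{1..k}. card {w. ?A v' w \<and> ?C v' w = j})"
        by (rule deg_sum) (use finN Arng in auto)
      also have "\<dots> = (\<Sum>j\<in>{1..k}. b j)" using cd v Dcard by simp
      finally show "degree ?E v' = (\<Sum>j = 1..k. b j)" .
    qed
    show "\<exists>f. (\<forall>e\<in>?E. f e \<in> {1..k}) \<and>
          (\<forall>v\<in>?V. (\<forall>j\<in>{1..k}. col_degree ?E f j v = b j) \<and>
                  (\<forall>j\<in>{1..<k}. col_edges_nbhd ?E f (Suc j) v < col_edges_nbhd ?E f j v))"
    proof (intro exI[of _ ?f] conjI ballI)
      fix e assume "e \<in> ?E"
      then obtain u w where "e = {u,w}" "?A u w" unfolding edges_of_def by blast
      then show "?f e \<in> {1..k}" using ecol_eq[OF Acsym] Arng by simp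
    next
      fix v' j assume "v' \<in> ?V" "j \<in> {1..k}"
      then obtain v where v: "v' = g v" "v \<in> V" by auto
      show "col_degree ?E ?f j v' = b j"
        unfolding coldeg_eq[OF Asym Acsym] using v Dcard cd \<open>j \<in> {1..k}\<close> by simp
    next
      fix v' j assume "v' \<in> ?V" "j \<in> {1..<k}"
      then obtain v where v: "v' = g v" "v \<in> V" by auto
      have "2 * col_edges_nbhd ?E ?f (Suc j) v' < 2 * col_edges_nbhd ?E ?f j v'"
        unfolding edges_nbhd_eq[OF Asym Acsym Airr finV AinV] v(1) Ocard using ed v \<open>j \<in> {1..<k}\<close> by simp
      then show "col_edges_nbhd ?E ?f (Suc j) v' < col_edges_nbhd ?E ?f j v'" by simp
    qed
  qed
  then show ?thesis by blast
qed

definition cum :: "(nat \<Rightarrow> nat) \<Rightarrow> nat \<Rightarrow> nat" where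
  "cum c j = (\<Sum>l\<in>{1..j}. c l)"
definition tau :: "(nat \<Rightarrow> nat) \<Rightarrow> nat \<Rightarrow> nat" where
  "tau c d = (LEAST j. d < cum c j)"

lemma cum_0[simp]: "cum c 0 = 0" by (simp add: cum_def)
lemma cum_Suc: "cum c (Suc j) = cum c j + c (Suc j)" by (simp add: cum_def)
lemma cum_mono: "i \<le> j \<Longrightarrow> cum c i \<le> cum c j"
  unfolding cum_def by (rule sum_mono2) auto

lemma tau_range: assumes "d < cum c k" shows "tau c d \<in> {1..k}"
proof -
  have le: "tau c d \<le> k" unfolding tau_def using assms by (rule Least_le)
  have "d < cum c (tau c d)" unfolding tau_def using assms by (rule LeastI)
  then have "tau c d \<noteq> 0" by (metis cum_0 not_less0)
  then show ?thesis using le by auto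
qed

lemma tau_iff: assumes "1 \<le> j" and dk: "d < cum c K"
  shows "tau c d = j \<longleftrightarrow> cum c (j - 1) \<le> d \<and> d < cum c j"
proof
  assume t: "tau c d = j"
  have ex: "d < cum c (tau c d)" unfolding tau_def using dk by (rule LeastI)
  have "\<not> d < cum c (j - 1)" using not_less_Least[of "j - 1" "\<lambda>j. d < cum c j"] t assms
    unfolding tau_def by simp
  then show "cum c (j - 1) \<le> d \<and> d < cum c j" using ex t by simp
next
  assume h: "cum c (j - 1) \<le> d \<and> d < cum c j"
  show "tau c d = j" unfolding tau_def
  proof (rule Least_equality)
    show "d < cum c j" using h by simp
  next
    fix i assume "d < cum c i"
    show "j \<le> i"
    proof (rule ccontr)
      assume "\<not> j \<le> i" then have "i \<le> j - 1" by simp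
      then have "cum c i \<le> cum c (j - 1)" by (rule cum_mono)
      then show False using h \<open>d < cum c i\<close> by simp
    qed
  qed
qed

lemma tau_count: assumes "1 \<le> j" "j \<le> k"
  shows "card {d. d < cum c k \<and> tau c d = j} = c j"
proof -
  have "{d. d < cum c k \<and> tau c d = j} = {cum c (j - 1)..<cum c j}"
  proof (rule set_eqI)
    fix d
    have ck: "cum c j \<le> cum c k" using cum_mono[OF assms(2)] .
    show "d \<in> {d. d < cum c k \<and> tau c d = j} \<longleftrightarrow> d \<in> {cum c (j - 1)..<cum c j}"
    proof
      assume "d \<in> {d. d < cum c k \<and> tau c d = j}"
      then show "d \<in> {cum c (j - 1)..<cum c j}" using tau_iff[OF assms(1), of d c k] by auto
    next
      assume d: "d \<in> {cum c (j - 1)..<cum c j}"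
      then have "d < cum c k" using ck by simp
      then show "d \<in> {d. d < cum c k \<and> tau c d = j}" using tau_iff[OF assms(1), of d c k] d by auto
    qed
  qed
  moreover have "cum c j = cum c (j - 1) + c j" using cum_Suc[of c "j - 1"] assms(1) by simp
  ultimately show ?thesis by simp
qed

lemma mod_shift_count:
  fixes x m :: nat
  assumes "x < m"
  shows "card {y. y < m \<and> P ((x + y) mod m)} = card {d. d < m \<and> P d}"
proof -
  let ?f = "\<lambda>y. (x + y) mod m"
  have inj: "inj_on ?f {..<m}"
  proof (rule inj_onI)
    fix a b assume a: "a \<in> {..<m}" and b: "b \<in> {..<m}" and e: "?f a = ?f b"
    show "a = b"
    proof (cases "a \<le> b")
      case True
      then have "m dvd (x + b) - (x + a)" using mod_eq_dvd_iff_nat[of "x + a" "x + b" m] e by simp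
      then have "m dvd b - a" by simp
      moreover have "b - a < m" using b by simp
      ultimately have "b - a = 0" using nat_dvd_not_less by blast
      then show ?thesis using True by simp
    next
      case False
      then have "m dvd (x + a) - (x + b)" using mod_eq_dvd_iff_nat[of "x + b" "x + a" m] e by simp
      then have "m dvd a - b" by simp
      moreover have "a - b < m" using a by simp
      ultimately have "a - b = 0" using nat_dvd_not_less by blast
      then show ?thesis using False by simp
    qed
  qed
  have m0: "0 < m" using assms by simp
  have img: "?f ` {..<m} = {..<m}"
  proof (rule endo_inj_surj)
    show "?f ` {..<m} \<subseteq> {..<m}" using m0 by auto
  qed (use inj in auto)
  have "?f ` {y. y < m \<and> P ((x + y) mod m)} = {d. d < m \<and> P d}"
  proof -
    have "{y. y < m \<and> P ((x + y) mod m)} = {y \<in> {..<m}. P (?f y)}" by auto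
    then have "?f ` {y. y < m \<and> P ((x + y) mod m)} = {d \<in> ?f ` {..<m}. P d}" by blast
    then show ?thesis using img by simp
  qed
  moreover have "inj_on ?f {y. y < m \<and> P ((x + y) mod m)}"
    by (rule inj_on_subset[OF inj]) auto
  ultimately show ?thesis by (metis card_image)
qed

lemma tau_shift_count:
  assumes "x < cum c k" "1 \<le> j" "j \<le> k"
  shows "card {y. y < cum c k \<and> tau c ((x + y) mod cum c k) = j} = c j"
  using mod_shift_count[OF assms(1), of "\<lambda>d. tau c d = j"] tau_count[OF assms(2,3)] by simp

datatype vtx = Vx bool nat bool nat bool nat

locale constr =
  fixes c1 c2 c3 :: "nat \<Rightarrow> nat" and k :: nat
begin

definition "hh = cum c1 k"
definition "nn = cum c2 k"
definition "pp = cum c3 k"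

fun inV :: "vtx \<Rightarrow> bool" where
  "inV (Vx s1 x s2 a s3 w) = (x < hh \<and> a < nn \<and> w < pp)"

fun adj0 :: "vtx \<Rightarrow> vtx \<Rightarrow> bool" where
  "adj0 (Vx s1 x s2 a s3 w) (Vx t1 y t2 b t3 z) =
     ((s2 = t2 \<and> a = b \<and> s3 = t3 \<and> w = z \<and> s1 \<noteq> t1) \<or>
      (s2 \<noteq> t2 \<and> s3 = t3 \<and> w = z) \<or>
      (s1 = t1 \<and> x = y \<and> s2 = t2 \<and> a = b \<and> s3 \<noteq> t3))"

definition adj :: "vtx \<Rightarrow> vtx \<Rightarrow> bool" where
  "adj u w = (inV u \<and> inV w \<and> adj0 u w)"

fun col :: "vtx \<Rightarrow> vtx \<Rightarrow> nat" where
  "col (Vx s1 x s2 a s3 w) (Vx t1 y t2 b t3 z) =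
     (if s2 \<noteq> t2 then tau c2 ((a + b) mod nn)
      else if s3 \<noteq> t3 then tau c3 ((w + z) mod pp)
      else tau c1 ((x + y) mod hh))"

definition "VV = {u. inV u}"

lemma VV_eq: "VV = (\<lambda>(s1,x,s2,a,s3,w). Vx s1 x s2 a s3 w) ` (UNIV \<times> {..<hh} \<times> UNIV \<times> {..<nn} \<times> UNIV \<times> {..<pp})"
proof (rule set_eqI)
  fix u show "u \<in> VV \<longleftrightarrow> u \<in> (\<lambda>(s1,x,s2,a,s3,w). Vx s1 x s2 a s3 w) ` (UNIV \<times> {..<hh} \<times> UNIV \<times> {..<nn} \<times> UNIV \<times> {..<pp})"
    by (cases u) (auto simp: VV_def image_iff)
qed

lemma fin_VV: "finite VV"
  unfolding VV_eq by simp

lemma adj_sym: "adj u w \<Longrightarrow> adj w u"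
  by (cases u; cases w) (auto simp: adj_def)

lemma adj_irr: "\<not> adj u u"
  by (cases u) (auto simp: adj_def)

lemma col_sym: "col u w = col w u"
  by (cases u; cases w) (auto simp: add.commute)

lemma col_rng: "adj u w \<Longrightarrow> col u w \<in> {1..k}"
proof (cases u; cases w)
  fix s1 x s2 a s3 w0 t1 y t2 b t3 z
  assume "adj u w" "u = Vx s1 x s2 a s3 w0" "w = Vx t1 y t2 b t3 z"
  then have h: "x < hh" "y < hh" "a < nn" "b < nn" "w0 < pp" "z < pp" by (auto simp: adj_def)
  have "(a + b) mod nn < cum c2 k" using h unfolding nn_def by simp
  then have r2: "tau c2 ((a + b) mod nn) \<in> {1..k}" by (rule tau_range)
  have "(w0 + z) mod pp < cum c3 k" using h unfolding pp_def by simp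
  then have r3: "tau c3 ((w0 + z) mod pp) \<in> {1..k}" by (rule tau_range)
  have "(x + y) mod hh < cum c1 k" using h unfolding hh_def by simp
  then have r1: "tau c1 ((x + y) mod hh) \<in> {1..k}" by (rule tau_range)
  show "col u w \<in> {1..k}" using \<open>u = _\<close> \<open>w = _\<close> r1 r2 r3 by simp
qed

lemma D_card:
  assumes iv: "inV v" and j: "1 \<le> j" "j \<le> k"
  shows "card {u. adj v u \<and> col v u = j} = c1 j + 2 * hh * c2 j + c3 j"
proof -
  obtain s1 x s2 a s3 w where v: "v = Vx s1 x s2 a s3 w" by (cases v)
  have lt: "x < hh" "a < nn" "w < pp" using iv v by auto
  define B1 where "B1 = {y. y < hh \<and> tau c1 ((x + y) mod hh) = j}"
  define B2 where "B2 = {b. b < nn \<and> tau c2 ((a + b) mod nn) = j}"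
  define B3 where "B3 = {z. z < pp \<and> tau c3 ((w + z) mod pp) = j}"
  define S1 where "S1 = (\<lambda>y. Vx (\<not> s1) y s2 a s3 w) ` B1"
  define S2 where "S2 = (\<lambda>(t,y,b). Vx t y (\<not> s2) b s3 w) ` (UNIV \<times> {..<hh} \<times> B2)"
  define S3 where "S3 = (\<lambda>z. Vx s1 x s2 a (\<not> s3) z) ` B3"
  have eq: "{u. adj v u \<and> col v u = j} = S1 \<union> (S2 \<union> S3)"
  proof (rule set_eqI)
    fix u
    show "u \<in> {u. adj v u \<and> col v u = j} \<longleftrightarrow> u \<in> S1 \<union> (S2 \<union> S3)"
      by (cases u) (auto simp: v adj_def S1_def S2_def S3_def B1_def B2_def B3_def lt image_iff)
  qed
  have cB1: "card B1 = c1 j" unfolding B1_def hh_def using tau_shift_count[of x c1 k j] lt j unfolding hh_def by simp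
  have cB2: "card B2 = c2 j" unfolding B2_def nn_def using tau_shift_count[of a c2 k j] lt j unfolding nn_def by simp
  have cB3: "card B3 = c3 j" unfolding B3_def pp_def using tau_shift_count[of w c3 k j] lt j unfolding pp_def by simp
  have fB2: "finite B2" unfolding B2_def by simp
  have cS1: "card S1 = c1 j" unfolding S1_def by (subst card_image) (auto simp: inj_on_def cB1)
  have cS3: "card S3 = c3 j" unfolding S3_def by (subst card_image) (auto simp: inj_on_def cB3)
  have cS2: "card S2 = 2 * hh * c2 j"
  proof -
    have "inj_on (\<lambda>(t,y,b). Vx t y (\<not> s2) b s3 w) (UNIV \<times> {..<hh} \<times> B2)" by (auto simp: inj_on_def)
    then have "card S2 = card ((UNIV::bool set) \<times> {..<hh} \<times> B2)" unfolding S2_def by (simp add: card_image)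
    also have "\<dots> = 2 * (hh * c2 j)" by (simp add: card_cartesian_product cB2)
    finally show ?thesis by simp
  qed
  have fS: "finite S1" "finite S2" "finite S3" unfolding S1_def S2_def S3_def B1_def B3_def using fB2 by auto
  have d1: "S1 \<inter> (S2 \<union> S3) = {}" unfolding S1_def S2_def S3_def by auto
  have d2: "S2 \<inter> S3 = {}" unfolding S2_def S3_def by auto
  have "card (S1 \<union> (S2 \<union> S3)) = card S1 + (card S2 + card S3)"
    using fS d1 d2 by (simp add: card_Un_disjoint)
  then show ?thesis using eq cS1 cS2 cS3 by simp
qed

lemma O_card:
  assumes iv: "inV v" and j: "1 \<le> j" "j \<le> k"
  shows "card (OPS adj col v j) = 2 * (c1 j + 2 * hh * c2 j + c3 j) + 2 * hh * nn * c1 j + 4 * hh * hh * c2 j"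
proof -
  obtain s1 x s2 a s3 w where v: "v = Vx s1 x s2 a s3 w" by (cases v)
  have lt: "x < hh" "a < nn" "w < pp" using iv v by auto
  define D where "D = {u. adj v u \<and> col v u = j}"
  define B2 where "B2 = {b. b < nn \<and> tau c2 ((a + b) mod nn) = j}"
  define PBs where "PBs = {(t::bool,y,b,y'). y < hh \<and> b < nn \<and> y' < hh \<and> tau c1 ((y + y') mod hh) = j}"
  define PABs where "PABs = {..<hh} \<times> (UNIV::bool set) \<times> {..<hh} \<times> B2"
  define mB where "mB = (\<lambda>(t,y,b,y'). (Vx t y (\<not> s2) b s3 w, Vx (\<not> t) y' (\<not> s2) b s3 w))"
  define mAB where "mAB = (\<lambda>(y,t,y',b). (Vx (\<not> s1) y s2 a s3 w, Vx t y' (\<not> s2) b s3 w))"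
  define mBA where "mBA = (\<lambda>(y,t,y',b). (Vx t y' (\<not> s2) b s3 w, Vx (\<not> s1) y s2 a s3 w))"
  define Pout where "Pout = (\<lambda>u. (v,u)) ` D"
  define Pin where "Pin = (\<lambda>u. (u,v)) ` D"
  define PB where "PB = mB ` PBs"
  define PAB where "PAB = mAB ` PABs"
  define PBA where "PBA = mBA ` PABs"
  have eq: "OPS adj col v j = Pout \<union> (Pin \<union> (PB \<union> (PAB \<union> PBA)))"
  proof (rule set_eqI)
    fix p :: "vtx \<times> vtx"
    obtain u u' where p: "p = (u,u')" by (cases p)
    obtain t1 y1 t2 b1 t3 z1 where u: "u = Vx t1 y1 t2 b1 t3 z1" by (cases u)
    obtain r1 y2 r2 b2 r3 z2 where u': "u' = Vx r1 y2 r2 b2 r3 z2" by (cases u')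
    show "p \<in> OPS adj col v j \<longleftrightarrow> p \<in> Pout \<union> (Pin \<union> (PB \<union> (PAB \<union> PBA)))"
      unfolding p u u' v OPS_def Pout_def Pin_def PB_def PAB_def PBA_def mB_def mAB_def mBA_def
        PBs_def PABs_def B2_def D_def
      using lt by (auto simp: adj_def image_iff add.commute)
  qed
  have cD: "card D = c1 j + 2 * hh * c2 j + c3 j" unfolding D_def by (rule D_card[OF iv j])
  have finD: "finite D" unfolding D_def
    by (rule finite_subset[OF _ fin_VV]) (auto simp: adj_def VV_def)
  have cout: "card Pout = card D" unfolding Pout_def by (rule card_image) (auto simp: inj_on_def)
  have cin: "card Pin = card D" unfolding Pin_def by (rule card_image) (auto simp: inj_on_def)
  have cB1: "card {y'. y' < hh \<and> tau c1 ((y + y') mod hh) = j} = c1 j" if "y < hh" for y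
    using tau_shift_count[of y c1 k j] that j unfolding hh_def by simp
  have PBs_eq: "PBs = (UNIV::bool set) \<times> (SIGMA y:{..<hh}. {..<nn} \<times> {y'. y' < hh \<and> tau c1 ((y + y') mod hh) = j})"
    unfolding PBs_def by auto
  have cPBs: "card PBs = 2 * (hh * (nn * c1 j))"
  proof -
    have "card (SIGMA y:{..<hh}. {..<nn} \<times> {y'. y' < hh \<and> tau c1 ((y + y') mod hh) = j})
        = (\<Sum>y\<in>{..<hh}. card ({..<nn} \<times> {y'. y' < hh \<and> tau c1 ((y + y') mod hh) = j}))"
      by (rule card_SigmaI) auto
    also have "\<dots> = (\<Sum>y\<in>{..<hh}. nn * c1 j)"
      by (rule sum.cong) (auto simp: card_cartesian_product cB1)
    finally show ?thesis unfolding PBs_eq by (simp add: card_cartesian_product)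
  qed
  have cB2: "card B2 = c2 j" unfolding B2_def using tau_shift_count[of a c2 k j] lt j unfolding nn_def by simp
  have cPABs: "card PABs = hh * (2 * (hh * c2 j))" unfolding PABs_def by (simp add: card_cartesian_product cB2)
  have cPB: "card PB = card PBs" unfolding PB_def mB_def by (rule card_image) (auto simp: inj_on_def)
  have cPAB: "card PAB = card PABs" unfolding PAB_def mAB_def by (rule card_image) (auto simp: inj_on_def)
  have cPBA: "card PBA = card PABs" unfolding PBA_def mBA_def by (rule card_image) (auto simp: inj_on_def)
  have fPBs: "finite PBs" unfolding PBs_eq by auto
  have fPABs: "finite PABs" unfolding PABs_def B2_def by auto
  have fin: "finite Pout" "finite Pin" "finite PB" "finite PAB" "finite PBA"
    unfolding Pout_def Pin_def PB_def PAB_def PBA_def using finD fPBs fPABs by auto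
  have Dv: "u \<in> D \<Longrightarrow> u \<noteq> v" for u unfolding D_def using adj_irr by auto
  have Ds2: "u \<in> D \<Longrightarrow> True" for u by simp
  have dis1: "Pout \<inter> (Pin \<union> (PB \<union> (PAB \<union> PBA))) = {}"
    unfolding Pout_def Pin_def PB_def PAB_def PBA_def mB_def mAB_def mBA_def v using Dv v by auto
  have dis2: "Pin \<inter> (PB \<union> (PAB \<union> PBA)) = {}"
    unfolding Pin_def PB_def PAB_def PBA_def mB_def mAB_def mBA_def v by auto
  have dis3: "PB \<inter> (PAB \<union> PBA) = {}"
    unfolding PB_def PAB_def PBA_def mB_def mAB_def mBA_def by auto
  have dis4: "PAB \<inter> PBA = {}"
    unfolding PAB_def PBA_def mAB_def mBA_def by auto
  have "card (Pout \<union> (Pin \<union> (PB \<union> (PAB \<union> PBA)))) = card Pout + (card Pin + (card PB + (card PAB + card PBA)))"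
    using fin dis1 dis2 dis3 dis4 by (simp add: card_Un_disjoint)
  then show ?thesis unfolding eq cout cin cPB cPAB cPBA cPBs cPABs cD by (simp add: algebra_simps)
qed

end

definition Ofun :: "nat \<Rightarrow> nat \<Rightarrow> nat \<Rightarrow> nat \<Rightarrow> nat \<Rightarrow> nat" where
  "Ofun h n c1 c2 c3 = 2 * (c1 + 2 * h * c2 + c3) + 2 * h * n * c1 + 4 * h * h * c2"

lemma LQ:
  fixes h n s k Q :: nat
  assumes Q1: "Q \<ge> 1" and kQ: "k - Q \<ge> 3 * Q" and h3: "h \<le> 3 * Q * Q" and h0: "h > 0"
    and nb: "n \<ge> (k - Q) * s" and sb: "s \<ge> 2 * (h + 1) * k + 5"
  shows "Ofun h n 0 (s + k - Suc Q) (4 * h) < Ofun h n (2 * Q + 1) 0 (2 * Q)"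
proof -
  define R where "R = s + k - Suc Q"
  have R: "R \<le> s + k" unfolding R_def by simp
  have "2 * h + 3 \<le> 3 * Q * (2 * Q + 1)" using h3 Q1 by (simp add: algebra_simps)
  also have "\<dots> \<le> (k - Q) * (2 * Q + 1)" using kQ by (intro mult_le_mono1) simp
  finally have c1: "2 * h + 3 \<le> (k - Q) * (2 * Q + 1)" .
  have "(2 * h + 3) * s \<le> (k - Q) * (2 * Q + 1) * s" using c1 by (intro mult_le_mono1)
  also have "\<dots> = ((k - Q) * s) * (2 * Q + 1)" by (metis mult.assoc mult.commute)
  also have "\<dots> \<le> n * (2 * Q + 1)" using nb by (intro mult_le_mono1)
  finally have c2: "(2 * h + 3) * s \<le> n * (2 * Q + 1)" .
  have "2 * (h + 1) * R \<le> 2 * (h + 1) * (s + k)" using R by (intro mult_le_mono2)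
  then have c3: "2 * (h + 1) * R + 4 < (2 * h + 3) * s"
    using sb by (simp add: algebra_simps)
  have c4: "2 * ((h + 1) * R + 2) < n * (2 * Q + 1)" using c2 c3 by (simp add: algebra_simps)
  have "2 * h * (2 * ((h + 1) * R + 2)) < 2 * h * (n * (2 * Q + 1))"
    using c4 h0 by (intro mult_less_mono2) auto
  then show ?thesis unfolding Ofun_def R_def[symmetric] by (simp add: algebra_simps)
qed

lemma Llow:
  fixes h n X j :: nat
  assumes "h * n \<ge> 2"
  shows "Ofun h n X 0 (2 * Suc j) < Ofun h n (Suc X) 0 (2 * j)"
proof -
  have "h * n * X + 2 \<le> h * n * X + h * n" using assms by simp
  then show ?thesis unfolding Ofun_def by (simp add: algebra_simps)
qed

lemma Lhigh:
  fixes h n R Y :: nat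
  assumes "h \<ge> 2"
  shows "Ofun h n 0 R (4 * h * Y + 4 * h) < Ofun h n 0 (Suc R) (4 * h * Y)"
proof -
  have "2 * h \<le> h * h" using mult_le_mono1[OF assms, of h] by simp
  then show ?thesis using assms unfolding Ofun_def by (simp add: algebra_simps)
qed

fun enc :: "vtx \<Rightarrow> nat" where
  "enc (Vx s1 x s2 a s3 w) = to_nat (s1, x, s2, a, s3, w)"

lemma inj_enc: "inj enc"
proof (rule injI)
  fix u w assume "enc u = enc w"
  then show "u = w" by (cases u; cases w) auto
qed

lemma cum_ge: "1 \<le> i \<Longrightarrow> i \<le> k \<Longrightarrow> c i \<le> cum c k"
  unfolding cum_def by (rule member_le_sum) auto

lemma cum_supp: assumes "1 \<le> lo" "hi \<le> k" "\<forall>l. (l < lo \<or> hi < l) \<longrightarrow> c l = 0"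
  shows "cum c k = (\<Sum>l\<in>{lo..hi}. c l)"
  unfolding cum_def by (rule sum.mono_neutral_right) (use assms in auto)

theorem theorem4p5:
  fixes k q :: nat
  assumes "k > 3"
    and "q = 1 \<or> 4 * q < k"
  shows "\<exists>a :: nat \<Rightarrow> nat. \<forall>N :: nat. \<exists>b :: nat \<Rightarrow> nat.
           (\<forall>i\<in>{1..q}. b i = a i) \<and> b k > N \<and>
           (\<exists>(V :: nat set) E. flip_graph k b V E)"
proof -
  define Q where "Q = max q 1"
  have Q1: "Q \<ge> 1" and qQ: "q \<le> Q" unfolding Q_def by auto
  have kQ: "k - Q \<ge> 3 * Q" using assms unfolding Q_def by auto
  have Qk: "Q < k" using kQ Q1 by linarith
  define a where "a = (\<lambda>i::nat. 3 * Q + 1 + i)"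
  show ?thesis
  proof (rule exI[of _ a], rule allI)
    fix N :: nat
    define c1 where "c1 = (\<lambda>j. if 1 \<le> j \<and> j \<le> Q then 3 * Q + 1 - j else 0)"
    define h where "h = cum c1 k"
    define s where "s = N + 2 * (h + 1) * k + 5"
    define c2 where "c2 = (\<lambda>j. if Q < j \<and> j \<le> k then s + k - j else 0)"
    define c3 where "c3 = (\<lambda>j. if 1 \<le> j \<and> j \<le> Q then 2 * j else if Q < j \<and> j \<le> k then 4 * h * (j - Q) else 0)"
    define n where "n = cum c2 k"
    define b where "b = (\<lambda>j. c1 j + 2 * h * c2 j + c3 j)"
    interpret C: constr c1 c2 c3 k .
    have hh: "C.hh = h" unfolding C.hh_def h_def ..
    have nn: "C.nn = n" unfolding C.nn_def n_def ..
    have h3: "h \<ge> 3 * Q"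
    proof -
      have "c1 1 \<le> h" unfolding h_def by (rule cum_ge) (use Qk in auto)
      then show ?thesis unfolding c1_def using Q1 by simp
    qed
    have hQ: "h \<le> 3 * Q * Q"
    proof -
      have "h = (\<Sum>l\<in>{1..Q}. c1 l)" unfolding h_def by (rule cum_supp) (use Qk in \<open>auto simp: c1_def\<close>)
      also have "\<dots> \<le> (\<Sum>l\<in>{1..Q}. 3 * Q)" by (rule sum_mono) (auto simp: c1_def)
      finally show ?thesis by simp
    qed
    have nb: "n \<ge> (k - Q) * s"
    proof -
      have "n = (\<Sum>l\<in>{Suc Q..k}. c2 l)" unfolding n_def by (rule cum_supp) (use Qk in \<open>auto simp: c2_def\<close>)
      moreover have "(\<Sum>l\<in>{Suc Q..k}. s) \<le> (\<Sum>l\<in>{Suc Q..k}. c2 l)" by (rule sum_mono) (auto simp: c2_def)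
      ultimately show ?thesis by simp
    qed
    have sN: "s > N" unfolding s_def by simp
    have n1: "n \<ge> 1"
    proof -
      have "1 \<le> (k - Q) * s" using Qk sN by simp
      then show ?thesis using nb by linarith
    qed
    have p1: "C.pp \<ge> 1"
    proof -
      have "c3 1 \<le> C.pp" unfolding C.pp_def by (rule cum_ge) (use Qk in auto)
      then show ?thesis unfolding c3_def using Q1 by simp
    qed
    have sb: "s \<ge> 2 * (h + 1) * k + 5" unfolding s_def by simp
    have fixed: "\<forall>i\<in>{1..q}. b i = a i"
      unfolding b_def a_def c1_def c2_def c3_def using qQ by auto
    have bk: "b k > N"
    proof -
      have "c2 k = s" unfolding c2_def using Qk by simp
      then have "s \<le> 2 * h * c2 k" using h3 Q1 by simp
      then show ?thesis unfolding b_def using sN by simp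
    qed
    have ed_ineq: "Ofun h n (c1 (Suc j)) (c2 (Suc j)) (c3 (Suc j)) < Ofun h n (c1 j) (c2 j) (c3 j)"
      if j: "1 \<le> j" "j < k" for j
    proof -
      consider (lo) "j < Q" | (eq) "j = Q" | (hi) "Q < j" by linarith
      then show ?thesis
      proof cases
        case lo
        have hn: "h * n \<ge> 2" using h3 Q1 n1 mult_le_mono[of 3 h 1 n] by simp
        define X where "X = 3 * Q - j"
        have e1: "c1 j = Suc X" "c1 (Suc j) = X" unfolding c1_def X_def using lo j by auto
        have e2: "c2 j = 0" "c2 (Suc j) = 0" unfolding c2_def using lo by auto
        have e3: "c3 j = 2 * j" "c3 (Suc j) = 2 * Suc j" unfolding c3_def using lo j by auto
        show ?thesis unfolding e1 e2 e3 using Llow[OF hn] by simp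
      next
        case eq
        have e1: "c1 j = 2 * Q + 1" "c1 (Suc j) = 0" unfolding c1_def using eq j by auto
        have e2: "c2 j = 0" "c2 (Suc j) = s + k - Suc Q" unfolding c2_def using eq j by auto
        have e3: "c3 j = 2 * Q" "c3 (Suc j) = 4 * h" unfolding c3_def using eq j by auto
        have h0: "h > 0" using h3 Q1 by simp
        show ?thesis unfolding e1 e2 e3 using LQ[OF Q1 kQ hQ h0 nb sb] eq by simp
      next
        case hi
        define R where "R = s + k - Suc j"
        define Y where "Y = j - Q"
        have e1: "c1 j = 0" "c1 (Suc j) = 0" unfolding c1_def using hi by auto
        have e2: "c2 j = Suc R" "c2 (Suc j) = R" unfolding c2_def R_def using hi j by auto
        have e3: "c3 j = 4 * h * Y" "c3 (Suc j) = 4 * h * Y + 4 * h" unfolding c3_def Y_def using hi j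
          by (auto simp: Suc_diff_le algebra_simps)
        have h2: "h \<ge> 2" using h3 Q1 by simp
        show ?thesis unfolding e1 e2 e3 using Lhigh[OF h2] by simp
      qed
    qed
    have incr: "\<forall>j\<in>{1..<k}. b j < b (Suc j)"
    proof
      fix j assume "j \<in> {1..<k}"
      then have j: "1 \<le> j" "j < k" by auto
      consider (lo) "j < Q" | (eq) "j = Q" | (hi) "Q < j" by linarith
      then show "b j < b (Suc j)"
      proof cases
        case lo then show ?thesis unfolding b_def c1_def c2_def c3_def using j by auto
      next
        case eq
        have "b j = 4 * Q + 1" unfolding b_def c1_def c2_def c3_def using eq j by auto
        moreover have "b (Suc j) \<ge> 4 * h" unfolding b_def c1_def c2_def c3_def using eq j by auto
        ultimately show ?thesis using h3 Q1 by linarith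
      next
        case hi
        define R where "R = s + k - Suc j"
        define Y where "Y = j - Q"
        have e2: "c2 j = Suc R" "c2 (Suc j) = R" unfolding c2_def R_def using hi j by auto
        have e3: "c3 j = 4 * h * Y" "c3 (Suc j) = 4 * h * Y + 4 * h" unfolding c3_def Y_def using hi j
          by (auto simp: Suc_diff_le algebra_simps)
        have e1: "c1 j = 0" "c1 (Suc j) = 0" unfolding c1_def using hi by auto
        have h0: "h > 0" using h3 Q1 by simp
        show ?thesis unfolding b_def e1 e2 e3 using h0 by (simp add: algebra_simps)
      qed
    qed
    have b1: "0 < b 1" unfolding b_def c1_def using Q1 by simp
    have ne: "C.VV \<noteq> {}"
    proof -
      have "Vx False 0 False 0 False 0 \<in> C.VV" unfolding C.VV_def using h3 Q1 n1 p1 hh nn by auto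
      then show ?thesis by blast
    qed
    have flip: "\<exists>(V :: nat set) E. flip_graph k b V E"
    proof (rule flip_from_adj[of enc C.VV C.adj C.col k b])
      show "inj enc" by (rule inj_enc)
      show "finite C.VV" by (rule C.fin_VV)
      show "C.VV \<noteq> {}" by (rule ne)
      show "\<forall>u w. C.adj u w \<longrightarrow> u \<in> C.VV \<and> w \<in> C.VV" by (auto simp: C.adj_def C.VV_def)
      show "\<forall>u. \<not> C.adj u u" using C.adj_irr by blast
      show "\<forall>u w. C.adj u w \<longrightarrow> C.adj w u" using C.adj_sym by blast
      show "\<forall>u w. C.col u w = C.col w u" using C.col_sym by blast
      show "\<forall>u w. C.adj u w \<longrightarrow> C.col u w \<in> {1..k}" using C.col_rng by blast
      show "1 \<le> k" using Qk by simp
      show "0 < b 1" by (rule b1)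
      show "\<forall>j\<in>{1..<k}. b j < b (Suc j)" by (rule incr)
      show "\<forall>v\<in>C.VV. \<forall>j\<in>{1..k}. card {w. C.adj v w \<and> C.col v w = j} = b j"
        using C.D_card unfolding C.VV_def b_def hh by auto
      show "\<forall>v\<in>C.VV. \<forall>j\<in>{1..<k}. card (OPS C.adj C.col v (Suc j)) < card (OPS C.adj C.col v j)"
      proof (intro ballI)
        fix v j assume v: "v \<in> C.VV" and j: "j \<in> {1..<k}"
        have "card (OPS C.adj C.col v (Suc j)) = Ofun h n (c1 (Suc j)) (c2 (Suc j)) (c3 (Suc j))"
          using C.O_card[of v "Suc j"] v j unfolding C.VV_def Ofun_def hh nn by auto
        moreover have "card (OPS C.adj C.col v j) = Ofun h n (c1 j) (c2 j) (c3 j)"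
          using C.O_card[of v j] v j unfolding C.VV_def Ofun_def hh nn by auto
        ultimately show "card (OPS C.adj C.col v (Suc j)) < card (OPS C.adj C.col v j)"
          using ed_ineq j by auto
      qed
    qed
    show "\<exists>b. (\<forall>i\<in>{1..q}. b i = a i) \<and> N < b k \<and> (\<exists>(V :: nat set) E. flip_graph k b V E)"
      using fixed bk flip by blast
  qed
qed

end
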